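(* Consider a convolutional linear network with lifting operator $\mathcal{A}$ and family of admissible supports $\mathfrak{M}$ as described in the context. Assume $|\mathcal{P}|=1$ and that for all $\mathcal{S},\mathcal{S}'\in\mathfrak{M}$ all the entries of $M_1(\mathbb{1}^{\mathcal{S}_1\cup\mathcal{S}'_1})\cdots M_K(\mathbb{1}^{\mathcal{S}_K\cup\mathcal{S}'_K})$ belong to $\{0,1\}$. Then for all $\mathcal{S},\mathcal{S}'\in\mathfrak{M}$, $\ker\mathcal{A}_{\mathcal{S}\cup\mathcal{S}'}$ is the orthogonal complement of $\mathbb{T}_{\mathcal{S}\cup\mathcal{S}'}$; $\mathcal{A}$ satisfies the Deep-$\mathfrak{M}$-Null Space Property with constants $(\gamma,\rho)=(1,+\infty)$; and the Deep-lower-RIP constant of $\mathcal{A}$ with regard to $\mathfrak{M}$ is $\sigma_{\mathfrak{M}}=\sqrt{N}$.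
   Context: Network: $\mathcal{G}$ is a rooted directed acyclic graph with root $r$ and set of leaves $\mathcal{L}$, edges directed towards the root; $\mathcal{P}$ is the set of all leaf-to-root paths. Every such path has exactly $K$ edges and each edge has a well-defined depth $k\in\{1,\dots,K\}$ (edges ending at the root have depth 1); $\mathcal{E}(k)$ is the set of edges of depth $k$. Signals live in $\mathbb{R}^N$, $*$ denotes convolution on $\mathbb{R}^N$. Each edge $e$ carries a kernel of maximal support $\mathcal{S}_e\subset\{1,\dots,N\}$, with $\sum_{e\in\mathcal{E}(k)}|\mathcal{S}_e|=S$ for every $k$. For each $k$, $\mathbb{N}_S=\{1,\dots,S\}$ is partitioned into blocks, one per $e\in\mathcal{E}(k)$, of size $|\mathcal{S}_e|$, and $\mathcal{T}_e:\mathbb{R}^S\to\mathbb{R}^N$ writes the entries of $h$ in the block of $e$ at the positions $\mathcal{S}_e$. For $\mathbf{h}=(\mathbf{h}_1,\dots,\mathbf{h}_K)\in\mathbb{R}^{S\times K}$, $M_k(\mathbf{h}_k)$ maps signals $(y_v)$ at origin nodes of edges in $\mathcal{E}(k)$ to $(\sum_{e\in\mathcal{E}(k),e:v\to u}\mathcal{T}_e(\mathbf{h}_k)*y_v)_u$ at end nodes; the network is $M_1(\mathbf{h}_1)\cdots M_K(\mathbf{h}_K)\in\mathbb{R}^{N\times N|\mathcal{L}|}$. For $\mathcal{C}\subset\mathbb{N}_S$, $\mathbb{1}^{\mathcal{C}}\in\mathbb{R}^S$ is its indicator vector. Tensors: $\mathbb{R}^{S^K}$ is the space of order-$K$ tensors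 indexed by $\mathbf{i}\in\mathbb{N}_S^K$, with Euclidean norm $\|\cdot\|$; Segre embedding $P(\mathbf{h})_{\mathbf{i}}=\mathbf{h}_{1,\mathbf{i}_1}\cdots\mathbf{h}_{K,\mathbf{i}_K}$; $\mathcal{A}$ is the unique linear map $\mathbb{R}^{S^K}\to\mathbb{R}^{N\times N|\mathcal{L}|}$ with $\mathcal{A}P(\mathbf{h})=M_1(\mathbf{h}_1)\cdots M_K(\mathbf{h}_K)$; matrices carry the Frobenius norm. A support is $\mathcal{S}=(\mathcal{S}_1,\dots,\mathcal{S}_K)$, $\mathcal{S}_k\subset\mathbb{N}_S$; unions are componentwise; $\mathbf{i}\in\mathcal{S}$ means $\mathbf{i}_k\in\mathcal{S}_k$ for all $k$. $\mathbb{R}^{S\times K}_{\mathcal{S}}=\{\mathbf{h}:\mathbf{h}_{k,i}=0\text{ whenever }i\notin\mathcal{S}_k\}$, $\mathbb{T}_{\mathcal{S}}=\{T:T_{\mathbf{i}}=0\text{ whenever }\mathbf{i}\notin\mathcal{S}\}$, $P_{\mathcal{S}}$ the orthogonal projection onto $\mathbb{T}_{\mathcal{S}}$, $\mathcal{A}_{\mathcal{S}}=\mathcal{A}P_{\mathcal{S}}$. $\mathfrak{M}$ is a given finite family of supports. Deep-$\mathfrak{M}$-Null Space Property with constants $(\gamma,\rho)$ ($\rho=+\infty$ allowed): for all $\mathcal{S},\mathcal{S}'\in\mathfrak{M}$, every $T\in P(\mathbb{R}^{S\times K}_{\mathcal{S}})+P(\mathbb{R}^{S\times K}_{\mathcal{S}'})$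 with $\|\mathcal{A}_{\mathcal{S}\cup\mathcal{S}'}T\|\le\rho$ and every $T'\in\ker\mathcal{A}_{\mathcal{S}\cup\mathcal{S}'}$ satisfy $\|T\|\le\gamma\|T-P_{\mathcal{S}\cup\mathcal{S}'}T'\|$. Deep-lower-RIP constant: $\sigma_{\mathfrak{M}}>0$ such that for all $\mathcal{S},\mathcal{S}'\in\mathfrak{M}$ and all $T$ orthogonal to $\ker\mathcal{A}_{\mathcal{S}\cup\mathcal{S}'}$, $\sigma_{\mathfrak{M}}\|P_{\mathcal{S}\cup\mathcal{S}'}T\|\le\|\mathcal{A}_{\mathcal{S}\cup\mathcal{S}'}T\|$. *)

theory Defs
  imports Complex_Main "HOL-Library.Extended_Real"
begin

text \<open>Conventions (0-indexed): signals are functions nat => real on {0..<N};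
  N x N matrices are functions nat => nat => real on {0..<N} x {0..<N};
  depth k in {1..K} of the paper is index k in {0..<K}; N_S = {1..S} is {0..<S};
  tensors in R^(S^K) are functions on index lists of length K with entries < S.
  Since |P| = 1 the network is a single chain of K edges; E k is the support S_e
  of the unique edge of depth k+1.\<close>

definition Tmap :: "nat set \<Rightarrow> (nat \<Rightarrow> real) \<Rightarrow> nat \<Rightarrow> real" where
  "Tmap E h = (\<lambda>p. \<Sum>i<card E. if sorted_list_of_set E ! i = p then h i else 0)"

definition conv :: "nat \<Rightarrow> (nat \<Rightarrow> real) \<Rightarrow> (nat \<Rightarrow> real) \<Rightarrow> nat \<Rightarrow> real" where
  "conv N x y = (\<lambda>n. \<Sum>m<N. x m * y ((n + N - m) mod N))"

definition convmat :: "nat \<Rightarrow> nat set \<Rightarrow> (nat \<Rightarrow> real) \<Rightarrow> nat \<Rightarrow> nat \<Rightarrow> real" where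
  "convmat N E h = (\<lambda>a b. if a < N \<and> b < N then Tmap E h ((a + N - b) mod N) else 0)"

definition matmul :: "nat \<Rightarrow> (nat \<Rightarrow> nat \<Rightarrow> real) \<Rightarrow> (nat \<Rightarrow> nat \<Rightarrow> real) \<Rightarrow> nat \<Rightarrow> nat \<Rightarrow> real" where
  "matmul N A B = (\<lambda>a c. \<Sum>b<N. A a b * B b c)"

definition idmat :: "nat \<Rightarrow> nat \<Rightarrow> nat \<Rightarrow> real" where
  "idmat N = (\<lambda>a b. if a < N \<and> b = a then 1 else 0)"

text \<open>M_1(h_1) ... M_K(h_K); h k is the column h_(k+1).\<close>
definition network :: "nat \<Rightarrow> nat \<Rightarrow> (nat \<Rightarrow> nat set) \<Rightarrow> (nat \<Rightarrow> nat \<Rightarrow> real) \<Rightarrow> nat \<Rightarrow> nat \<Rightarrow> real" where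
  "network N K E h = foldr (\<lambda>k A. matmul N (convmat N (E k) (h k)) A) [0..<K] (idmat N)"

definition frob :: "nat \<Rightarrow> (nat \<Rightarrow> nat \<Rightarrow> real) \<Rightarrow> real" where
  "frob N A = sqrt (\<Sum>a<N. \<Sum>b<N. (A a b)\<^sup>2)"

definition tidx :: "nat \<Rightarrow> nat \<Rightarrow> nat list set" where
  "tidx K S = {i. length i = K \<and> (\<forall>k<K. i ! k < S)}"

definition tspace :: "nat \<Rightarrow> nat \<Rightarrow> (nat list \<Rightarrow> real) set" where
  "tspace K S = {T. \<forall>i. i \<notin> tidx K S \<longrightarrow> T i = 0}"

definition tinner :: "nat \<Rightarrow> nat \<Rightarrow> (nat list \<Rightarrow> real) \<Rightarrow> (nat list \<Rightarrow> real) \<Rightarrow> real" where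
  "tinner K S T U = (\<Sum>i\<in>tidx K S. T i * U i)"

definition tnorm :: "nat \<Rightarrow> nat \<Rightarrow> (nat list \<Rightarrow> real) \<Rightarrow> real" where
  "tnorm K S T = sqrt (\<Sum>i\<in>tidx K S. (T i)\<^sup>2)"

definition segre :: "nat \<Rightarrow> nat \<Rightarrow> (nat \<Rightarrow> nat \<Rightarrow> real) \<Rightarrow> nat list \<Rightarrow> real" where
  "segre K S h = (\<lambda>i. if i \<in> tidx K S then \<Prod>k<K. h k (i ! k) else 0)"

definition delta :: "nat \<Rightarrow> nat \<Rightarrow> real" where
  "delta j = (\<lambda>i. if i = j then 1 else 0)"

text \<open>The lifting operator A: the linear map with A (P h) = network h, written as
  its linear extension from the canonical basis tensors P(delta_(i_1),...,delta_(i_K)).\<close>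
definition lift :: "nat \<Rightarrow> nat \<Rightarrow> nat \<Rightarrow> (nat \<Rightarrow> nat set) \<Rightarrow> (nat list \<Rightarrow> real) \<Rightarrow> nat \<Rightarrow> nat \<Rightarrow> real" where
  "lift N K S E T = (\<lambda>a b. \<Sum>i\<in>tidx K S. T i * network N K E (\<lambda>k. delta (i ! k)) a b)"

definition in_supp :: "nat \<Rightarrow> (nat \<Rightarrow> nat set) \<Rightarrow> nat list \<Rightarrow> bool" where
  "in_supp K Sp i = (\<forall>k<K. i ! k \<in> Sp k)"

definition supp_union :: "(nat \<Rightarrow> nat set) \<Rightarrow> (nat \<Rightarrow> nat set) \<Rightarrow> nat \<Rightarrow> nat set" where
  "supp_union Sp Sp' = (\<lambda>k. Sp k \<union> Sp' k)"

definition Tsupp :: "nat \<Rightarrow> nat \<Rightarrow> (nat \<Rightarrow> nat set) \<Rightarrow> (nat list \<Rightarrow> real) set" where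
  "Tsupp K S Sp = {T \<in> tspace K S. \<forall>i. \<not> in_supp K Sp i \<longrightarrow> T i = 0}"

definition projS :: "nat \<Rightarrow> nat \<Rightarrow> (nat \<Rightarrow> nat set) \<Rightarrow> (nat list \<Rightarrow> real) \<Rightarrow> nat list \<Rightarrow> real" where
  "projS K S Sp T = (\<lambda>i. if i \<in> tidx K S \<and> in_supp K Sp i then T i else 0)"

definition liftS :: "nat \<Rightarrow> nat \<Rightarrow> nat \<Rightarrow> (nat \<Rightarrow> nat set) \<Rightarrow> (nat \<Rightarrow> nat set) \<Rightarrow> (nat list \<Rightarrow> real) \<Rightarrow> nat \<Rightarrow> nat \<Rightarrow> real" where
  "liftS N K S E Sp T = lift N K S E (projS K S Sp T)"

definition kerS :: "nat \<Rightarrow> nat \<Rightarrow> nat \<Rightarrow> (nat \<Rightarrow> nat set) \<Rightarrow> (nat \<Rightarrow> nat set) \<Rightarrow> (nat list \<Rightarrow> real) set" where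
  "kerS N K S E Sp = {T \<in> tspace K S. \<forall>a<N. \<forall>b<N. liftS N K S E Sp T a b = 0}"

definition orth_compl :: "nat \<Rightarrow> nat \<Rightarrow> (nat list \<Rightarrow> real) set \<Rightarrow> (nat list \<Rightarrow> real) set" where
  "orth_compl K S V = {T \<in> tspace K S. \<forall>U\<in>V. tinner K S T U = 0}"

text \<open>R^(SxK)_S (only entries h k i with k < K, i < S are meaningful).\<close>
definition hsupp :: "nat \<Rightarrow> nat \<Rightarrow> (nat \<Rightarrow> nat set) \<Rightarrow> (nat \<Rightarrow> nat \<Rightarrow> real) set" where
  "hsupp K S Sp = {h. \<forall>k<K. \<forall>i<S. i \<notin> Sp k \<longrightarrow> h k i = 0}"

definition indic_vec :: "nat set \<Rightarrow> nat \<Rightarrow> real" where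
  "indic_vec C = (\<lambda>i. if i \<in> C then 1 else 0)"

definition deep_NSP ::
  "nat \<Rightarrow> nat \<Rightarrow> nat \<Rightarrow> (nat \<Rightarrow> nat set) \<Rightarrow> (nat \<Rightarrow> nat set) set \<Rightarrow> real \<Rightarrow> ereal \<Rightarrow> bool" where
  "deep_NSP N K S E Mf \<gamma> \<rho> = (\<forall>Sp\<in>Mf. \<forall>Sp'\<in>Mf. \<forall>T T'.
      T \<in> {(\<lambda>i. T1 i + T2 i) | T1 T2.
              T1 \<in> segre K S ` hsupp K S Sp \<and> T2 \<in> segre K S ` hsupp K S Sp'} \<longrightarrow>
      ereal (frob N (liftS N K S E (supp_union Sp Sp') T)) \<le> \<rho> \<longrightarrow>
      T' \<in> kerS N K S E (supp_union Sp Sp') \<longrightarrow>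
      tnorm K S T \<le> \<gamma> * tnorm K S (\<lambda>i. T i - projS K S (supp_union Sp Sp') T' i))"

definition deep_lower_RIP ::
  "nat \<Rightarrow> nat \<Rightarrow> nat \<Rightarrow> (nat \<Rightarrow> nat set) \<Rightarrow> (nat \<Rightarrow> nat set) set \<Rightarrow> real \<Rightarrow> bool" where
  "deep_lower_RIP N K S E Mf \<sigma> = (\<sigma> > 0 \<and> (\<forall>Sp\<in>Mf. \<forall>Sp'\<in>Mf. \<forall>T\<in>tspace K S.
      (\<forall>U\<in>kerS N K S E (supp_union Sp Sp'). tinner K S T U = 0) \<longrightarrow>
      \<sigma> * tnorm K S (projS K S (supp_union Sp Sp') T)
        \<le> frob N (liftS N K S E (supp_union Sp Sp') T)))"

end

theory Submission
  imports Defs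
begin

definition Sh :: "nat \<Rightarrow> nat \<Rightarrow> nat \<Rightarrow> nat \<Rightarrow> real" where
  "Sh N m = (\<lambda>a b. if a < N \<and> b < N \<and> (int a - int b) mod int N = int m then 1 else 0)"

definition pos :: "(nat \<Rightarrow> nat set) \<Rightarrow> nat \<Rightarrow> nat \<Rightarrow> nat" where
  "pos E k j = sorted_list_of_set (E k) ! j"

definition Lset :: "nat \<Rightarrow> nat \<Rightarrow> nat list set" where
  "Lset S n = {i. length i = n \<and> (\<forall>k<n. i ! k < S)}"

lemma mod_bridge:
  fixes a b N :: nat assumes "b < N"
  shows "int ((a + N - b) mod N) = (int a - int b) mod int N"
proof -
  have "int ((a + N - b) mod N) = int (a + N - b) mod int N" by (simp add: of_nat_mod)
  also have "int (a + N - b) = (int a - int b) + int N" using assms by simp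
  also have "(int a - int b + int N) mod int N = (int a - int b) mod int N" by simp
  finally show ?thesis .
qed

lemma convmat_expand:
  assumes "card E = S"
  shows "convmat N E g a b = (\<Sum>j<S. g j * Sh N (sorted_list_of_set E ! j) a b)"
proof (cases "a < N \<and> b < N")
  case True
  have "convmat N E g a b = (\<Sum>j<S. if sorted_list_of_set E ! j = (a + N - b) mod N then g j else 0)"
    using True assms by (simp add: convmat_def Tmap_def)
  also have "\<dots> = (\<Sum>j<S. g j * Sh N (sorted_list_of_set E ! j) a b)"
  proof (rule sum.cong)
    fix j
    have "(int a - int b) mod int N = int (sorted_list_of_set E ! j) \<longleftrightarrow> sorted_list_of_set E ! j = (a + N - b) mod N"
      using mod_bridge[of b N a] True by (metis of_nat_eq_iff)
    then show "(if sorted_list_of_set E ! j = (a + N - b) mod N then g j else 0) = g j * Sh N (sorted_list_of_set E ! j) a b"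
      using True by (auto simp: Sh_def)
  qed simp
  finally show ?thesis .
next
  case False
  then show ?thesis by (auto simp: convmat_def Sh_def)
qed

lemma Sh_collapse:
  assumes "a < N" "m < N"
  shows "(\<Sum>b<N. Sh N m a b * f b) = f (nat ((int a - int m) mod int N))"
proof -
  define b0 where "b0 = nat ((int a - int m) mod int N)"
  have N0: "N > 0" using assms by simp
  have b0lt: "b0 < N" using N0 unfolding b0_def
    by (simp add: nat_less_iff)
  have key: "Sh N m a b = (if b = b0 then 1 else 0)" if "b < N" for b
  proof -
    have "(int a - int b) mod int N = int m \<longleftrightarrow> int b = (int a - int m) mod int N"
    proof
      assume h: "(int a - int b) mod int N = int m"
      have "int b mod int N = (int a - int m) mod int N"
        using h by (metis mod_diff_right_eq diff_diff_eq2 add_diff_cancel_left' mod_diff_left_eq)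
      then show "int b = (int a - int m) mod int N" using that by simp
    next
      assume h: "int b = (int a - int m) mod int N"
      have "(int a - int b) mod int N = (int a - (int a - int m)) mod int N"
        using h by (simp add: mod_diff_right_eq)
      then show "(int a - int b) mod int N = int m" using assms by simp
    qed
    moreover have "int b = (int a - int m) mod int N \<longleftrightarrow> b = b0"
      unfolding b0_def using N0 by auto
    ultimately show ?thesis using that assms by (auto simp: Sh_def)
  qed
  have "(\<Sum>b<N. Sh N m a b * f b) = (\<Sum>b<N. if b = b0 then f b else 0)"
    by (rule sum.cong) (auto simp: key)
  also have "\<dots> = f b0" using b0lt by simp
  finally show ?thesis unfolding b0_def .
qed


lemma matmul_Sh:
  assumes "p < N" "q < N"
  shows "(\<Sum>b<N. Sh N p a b * Sh N q b c) = Sh N ((p + q) mod N) a c"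
proof (cases "a < N")
  case True
  have "(\<Sum>b<N. Sh N p a b * Sh N q b c) = Sh N q (nat ((int a - int p) mod int N)) c"
    using Sh_collapse[OF True assms(1), of "\<lambda>b. Sh N q b c"] by simp
  also have "\<dots> = Sh N ((p + q) mod N) a c"
  proof -
    have N0: "N > 0" using assms by simp
    have i: "int (nat ((int a - int p) mod int N)) = (int a - int p) mod int N" using N0 by simp
    have "((int a - int p) mod int N - int c) mod int N = int q \<longleftrightarrow>
          (int a - int c) mod int N = int ((p + q) mod N)"
    proof -
      have "((int a - int p) mod int N - int c) mod int N = (int a - int c - int p) mod int N"
        by (simp add: mod_diff_left_eq algebra_simps)
      moreover have "int q = int q mod int N" using assms by simp
      moreover have "int ((p + q) mod N) = (int p + int q) mod int N" by (simp add: of_nat_mod)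
      moreover have "(int a - int c - int p) mod int N = int q mod int N \<longleftrightarrow> int N dvd (int a - int c - int p - int q)"
        by (rule mod_eq_dvd_iff)
      moreover have "(int a - int c) mod int N = (int p + int q) mod int N \<longleftrightarrow> int N dvd (int a - int c - (int p + int q))"
        by (rule mod_eq_dvd_iff)
      ultimately show ?thesis by (simp add: algebra_simps)
    qed
    then show ?thesis using True N0 i
      by (auto simp: Sh_def nat_less_iff)
  qed
  finally show ?thesis .
qed (auto simp: Sh_def)

lemma Sh_mult: "Sh N m a b * Sh N m' a b = (if m = m' then Sh N m a b else 0)"
  by (auto simp: Sh_def)

lemma Lset_0: "Lset S 0 = {[]}" by (auto simp: Lset_def)

lemma Lset_Suc: "Lset S (Suc n) = (\<lambda>(j,i). j # i) ` ({..<S} \<times> Lset S n)"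
proof
  show "Lset S (Suc n) \<subseteq> (\<lambda>(j,i). j # i) ` ({..<S} \<times> Lset S n)"
  proof
    fix x assume "x \<in> Lset S (Suc n)"
    then obtain j i where x: "x = j # i" "length i = n" and h: "\<forall>k<Suc n. x ! k < S"
      by (auto simp: Lset_def length_Suc_conv)
    have "j < S" using h x by (metis nth_Cons_0 zero_less_Suc)
    moreover have "i \<in> Lset S n" using h x by (auto simp: Lset_def)
    ultimately show "x \<in> (\<lambda>(j,i). j # i) ` ({..<S} \<times> Lset S n)" using x by auto
  qed
next
  show "(\<lambda>(j,i). j # i) ` ({..<S} \<times> Lset S n) \<subseteq> Lset S (Suc n)"
    by (auto simp: Lset_def nth_Cons split: nat.splits)
qed

lemma Lset_finite: "finite (Lset S n)"
  by (induction n) (auto simp: Lset_0 Lset_Suc)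


lemma foldr_expand:
  assumes "\<forall>k\<in>set ks. card (E k) = S \<and> E k \<subseteq> {..<N}" "N > 0"
  shows "foldr (\<lambda>k A. matmul N (convmat N (E k) (h k)) A) ks (idmat N) a c =
    (\<Sum>i\<in>Lset S (length ks). (\<Prod>j<length ks. h (ks!j) (i!j)) *
        Sh N ((\<Sum>j<length ks. pos E (ks!j) (i!j)) mod N) a c)"
  using assms(1)
proof (induction ks arbitrary: a c)
  case Nil
  have "idmat N a c = Sh N 0 a c"
  proof (cases "a < N \<and> c < N")
    case True
    then have "(int a - int c) mod int N = 0 \<longleftrightarrow> a = c"
      by (smt (verit) mod_pos_pos_trivial of_nat_less_iff mod_diff_eq int_ops(1) mod_eq_0_iff_dvd zdvd_not_zless
          nat_int of_nat_0_le_iff diff_ge_0_iff_ge zmod_zminus1_eq_if)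
    then show ?thesis using True by (auto simp: idmat_def Sh_def)
  qed (auto simp: idmat_def Sh_def)
  then show ?case by (simp add: Lset_0)
next
  case (Cons k ks)
  let ?n = "length ks"
  let ?F = "foldr (\<lambda>k A. matmul N (convmat N (E k) (h k)) A) ks (idmat N)"
  let ?P = "\<lambda>i. \<Prod>j<?n. h (ks!j) (i!j)"
  let ?s = "\<lambda>i. (\<Sum>j<?n. pos E (ks!j) (i!j)) mod N"
  have cardk: "card (E k) = S" and subk: "E k \<subseteq> {..<N}" using Cons.prems by auto
  have IH: "\<And>b c. ?F b c = (\<Sum>i\<in>Lset S ?n. ?P i * Sh N (?s i) b c)"
    using Cons by auto
  have pos_lt: "pos E k j < N" if "j < S" for j
  proof -
    have fin: "finite (E k)" using subk finite_subset by blast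
    have "sorted_list_of_set (E k) ! j \<in> set (sorted_list_of_set (E k))"
      using nth_mem[of j "sorted_list_of_set (E k)"] that cardk fin by simp
    then show ?thesis using fin subk by (auto simp: pos_def)
  qed
  have s_lt: "?s i < N" for i using assms(2) by simp
  have "foldr (\<lambda>k A. matmul N (convmat N (E k) (h k)) A) (k # ks) (idmat N) a c
      = (\<Sum>b<N. convmat N (E k) (h k) a b * ?F b c)" by (simp add: matmul_def)
  also have "\<dots> = (\<Sum>b<N. (\<Sum>j<S. h k j * Sh N (pos E k j) a b) * (\<Sum>i\<in>Lset S ?n. ?P i * Sh N (?s i) b c))"
    using convmat_expand[OF cardk] IH by (simp add: pos_def)
  also have "\<dots> = (\<Sum>b<N. \<Sum>j<S. \<Sum>i\<in>Lset S ?n. h k j * ?P i * (Sh N (pos E k j) a b * Sh N (?s i) b c))"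
    by (simp add: sum_product algebra_simps)
  also have "\<dots> = (\<Sum>j<S. \<Sum>i\<in>Lset S ?n. \<Sum>b<N. h k j * ?P i * (Sh N (pos E k j) a b * Sh N (?s i) b c))"
    by (simp add: sum.swap[of _ "{..<N}"])
  also have "\<dots> = (\<Sum>j<S. \<Sum>i\<in>Lset S ?n. h k j * ?P i * Sh N ((pos E k j + ?s i) mod N) a c)"
    by (simp add: sum_distrib_left[symmetric] matmul_Sh pos_lt s_lt)
  also have "\<dots> = (\<Sum>(j,i)\<in>{..<S} \<times> Lset S ?n. h k j * ?P i * Sh N ((pos E k j + ?s i) mod N) a c)"
    by (simp add: sum.cartesian_product)
  also have "\<dots> = (\<Sum>x\<in>(\<lambda>(j,i). j # i) ` ({..<S} \<times> Lset S ?n).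
        (\<Prod>j<length (k#ks). h ((k#ks)!j) (x!j)) *
        Sh N ((\<Sum>j<length (k#ks). pos E ((k#ks)!j) (x!j)) mod N) a c)"
  proof (subst sum.reindex)
    show "inj_on (\<lambda>(j,i). j # i) ({..<S} \<times> Lset S ?n)" by (auto simp: inj_on_def)
  next
    show "(\<Sum>(j,i)\<in>{..<S} \<times> Lset S ?n. h k j * ?P i * Sh N ((pos E k j + ?s i) mod N) a c) =
      sum ((\<lambda>x. (\<Prod>j<length (k#ks). h ((k#ks)!j) (x!j)) *
        Sh N ((\<Sum>j<length (k#ks). pos E ((k#ks)!j) (x!j)) mod N) a c) \<circ> (\<lambda>(j,i). j # i))
        ({..<S} \<times> Lset S ?n)"
    proof (rule sum.cong)
      fix x assume "x \<in> {..<S} \<times> Lset S ?n"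
      obtain j i where x: "x = (j, i)" by fastforce
      have p: "(\<Prod>jj<Suc ?n. h ((k#ks)!jj) ((j#i)!jj)) = h k j * ?P i"
        by (simp only: prod.lessThan_Suc_shift) simp
      have q: "(\<Sum>jj<Suc ?n. pos E ((k#ks)!jj) ((j#i)!jj)) = pos E k j + (\<Sum>jj<?n. pos E (ks!jj) (i!jj))"
        by (simp only: sum.lessThan_Suc_shift) simp
      show "(case x of (j,i) \<Rightarrow> h k j * ?P i * Sh N ((pos E k j + ?s i) mod N) a c) =
        ((\<lambda>x. (\<Prod>j<length (k#ks). h ((k#ks)!j) (x!j)) *
        Sh N ((\<Sum>j<length (k#ks). pos E ((k#ks)!j) (x!j)) mod N) a c) \<circ> (\<lambda>(j,i). j # i)) x"
        using p q by (simp add: x mod_add_right_eq del: prod.lessThan_Suc sum.lessThan_Suc)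
    qed simp
  qed
  finally show ?case by (simp add: Lset_Suc)
qed


definition spos :: "nat \<Rightarrow> nat \<Rightarrow> (nat \<Rightarrow> nat set) \<Rightarrow> nat list \<Rightarrow> nat" where
  "spos N K E i = (\<Sum>j<K. pos E j (i!j)) mod N"

lemma Lset_tidx: "Lset S K = tidx K S" by (simp add: Lset_def tidx_def)

lemma network_expand:
  assumes "\<forall>k<K. E k \<subseteq> {..<N}" "\<forall>k<K. card (E k) = S" "N > 0"
  shows "network N K E h a c = (\<Sum>i\<in>tidx K S. (\<Prod>j<K. h j (i!j)) * Sh N (spos N K E i) a c)"
proof -
  have "network N K E h a c = (\<Sum>i\<in>Lset S (length [0..<K]). (\<Prod>j<length [0..<K]. h ([0..<K]!j) (i!j)) *
        Sh N ((\<Sum>j<length [0..<K]. pos E ([0..<K]!j) (i!j)) mod N) a c)"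
    unfolding network_def by (rule foldr_expand) (use assms in auto)
  also have "\<dots> = (\<Sum>i\<in>tidx K S. (\<Prod>j<K. h j (i!j)) * Sh N (spos N K E i) a c)"
    unfolding spos_def Lset_tidx
    by (intro sum.cong refl arg_cong2[where f="(*)"] arg_cong[where f="\<lambda>m. Sh N m a c"]
        arg_cong[where f="\<lambda>m. m mod N"] prod.cong sum.cong) auto
  finally show ?thesis .
qed

lemma prod_delta:
  assumes "i \<in> tidx K S" "i' \<in> tidx K S"
  shows "(\<Prod>j<K. delta (i!j) (i'!j)) = (if i' = i then 1 else 0)"
proof (cases "i' = i")
  case True then show ?thesis by (simp add: delta_def)
next
  case False
  have "length i = K" "length i' = K" using assms by (auto simp: tidx_def)
  then obtain j where "j < K" "i'!j \<noteq> i!j" using False nth_equalityI by metis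
  then show ?thesis using False by (auto simp: delta_def intro!: prod_zero)
qed

lemma network_delta:
  assumes "\<forall>k<K. E k \<subseteq> {..<N}" "\<forall>k<K. card (E k) = S" "N > 0" "i \<in> tidx K S"
  shows "network N K E (\<lambda>k. delta (i!k)) a c = Sh N (spos N K E i) a c"
proof -
  have fin: "finite (tidx K S)" using Lset_finite Lset_tidx by metis
  have "network N K E (\<lambda>k. delta (i!k)) a c = (\<Sum>i'\<in>tidx K S. (if i' = i then 1 else 0) * Sh N (spos N K E i') a c)"
    using network_expand[OF assms(1-3)] prod_delta[OF assms(4)] by (auto intro!: sum.cong)
  also have "\<dots> = Sh N (spos N K E i) a c" using fin assms(4)
    by (simp add: if_distrib[of "\<lambda>x. x * _"] cong: if_cong)
  finally show ?thesis .
qed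

lemma prod_indic:
  "(\<Prod>j<K. indic_vec (U j) (i!j)) = (if in_supp K U i then 1 else 0)"
  by (auto simp: indic_vec_def in_supp_def intro!: prod_zero)

lemma network_indic:
  assumes "\<forall>k<K. E k \<subseteq> {..<N}" "\<forall>k<K. card (E k) = S" "N > 0"
  shows "network N K E (\<lambda>k. indic_vec (U k)) a c =
     (\<Sum>i\<in>tidx K S. (if in_supp K U i then 1 else 0) * Sh N (spos N K E i) a c)"
  using network_expand[OF assms] prod_indic by simp

lemma liftS_formula:
  assumes "\<forall>k<K. E k \<subseteq> {..<N}" "\<forall>k<K. card (E k) = S" "N > 0"
  shows "liftS N K S E U T a b = (\<Sum>i\<in>{i\<in>tidx K S. in_supp K U i}. T i * Sh N (spos N K E i) a b)"
proof -
  have fin: "finite (tidx K S)" using Lset_finite Lset_tidx by metis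
  have "liftS N K S E U T a b = (\<Sum>i\<in>tidx K S. (if in_supp K U i then T i * Sh N (spos N K E i) a b else 0))"
    unfolding liftS_def lift_def using network_delta[OF assms]
    by (auto simp: projS_def intro!: sum.cong)
  also have "\<dots> = (\<Sum>i\<in>{i\<in>tidx K S. in_supp K U i}. T i * Sh N (spos N K E i) a b)"
    using fin by (simp add: sum.inter_filter)
  finally show ?thesis .
qed


lemma row_Sh: assumes "a < N" "m < N" shows "(\<Sum>b<N. Sh N m a b) = 1"
  using Sh_collapse[OF assms, of "\<lambda>_. 1"] by simp

lemma sumsq_Sh:
  assumes "finite D" "inj_on f D" "\<forall>i\<in>D. f i < N"
  shows "(\<Sum>a<N. \<Sum>b<N. (\<Sum>i\<in>D. T i * Sh N (f i) a b)\<^sup>2) = real N * (\<Sum>i\<in>D. (T i)\<^sup>2)"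
proof -
  have pt: "(\<Sum>i\<in>D. T i * Sh N (f i) a b)\<^sup>2 = (\<Sum>i\<in>D. (T i)\<^sup>2 * Sh N (f i) a b)" for a b
  proof -
    have "(\<Sum>i\<in>D. T i * Sh N (f i) a b)\<^sup>2 = (\<Sum>i\<in>D. \<Sum>j\<in>D. (T i * Sh N (f i) a b) * (T j * Sh N (f j) a b))"
      by (simp add: power2_eq_square sum_product)
    also have "\<dots> = (\<Sum>i\<in>D. \<Sum>j\<in>D. if j = i then (T i)\<^sup>2 * Sh N (f i) a b else 0)"
    proof (intro sum.cong refl)
      fix i j assume "i \<in> D" "j \<in> D"
      then have "f i = f j \<longleftrightarrow> j = i" using assms(2) by (auto dest: inj_onD)
      then show "(T i * Sh N (f i) a b) * (T j * Sh N (f j) a b) = (if j = i then (T i)\<^sup>2 * Sh N (f i) a b else 0)"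
      proof -
        have r: "(T i * Sh N (f i) a b) * (T j * Sh N (f j) a b) = T i * T j * (Sh N (f i) a b * Sh N (f j) a b)"
          by (simp only: mult_ac)
        show ?thesis unfolding r Sh_mult using \<open>f i = f j \<longleftrightarrow> j = i\<close> by (simp add: power2_eq_square)
      qed
    qed
    also have "\<dots> = (\<Sum>i\<in>D. (T i)\<^sup>2 * Sh N (f i) a b)" using assms(1) by simp
    finally show ?thesis .
  qed
  have "(\<Sum>a<N. \<Sum>b<N. (\<Sum>i\<in>D. T i * Sh N (f i) a b)\<^sup>2) = (\<Sum>a<N. \<Sum>b<N. \<Sum>i\<in>D. (T i)\<^sup>2 * Sh N (f i) a b)"
    by (simp add: pt)
  also have "\<dots> = (\<Sum>i\<in>D. \<Sum>a<N. (T i)\<^sup>2 * (\<Sum>b<N. Sh N (f i) a b))"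
  proof -
    have "(\<Sum>a<N. \<Sum>b<N. \<Sum>i\<in>D. (T i)\<^sup>2 * Sh N (f i) a b) = (\<Sum>a<N. \<Sum>i\<in>D. \<Sum>b<N. (T i)\<^sup>2 * Sh N (f i) a b)"
      by (rule sum.cong[OF refl], rule sum.swap)
    also have "\<dots> = (\<Sum>i\<in>D. \<Sum>a<N. \<Sum>b<N. (T i)\<^sup>2 * Sh N (f i) a b)"
      by (rule sum.swap)
    finally show ?thesis by (simp add: sum_distrib_left)
  qed
  also have "\<dots> = (\<Sum>i\<in>D. \<Sum>a<N. (T i)\<^sup>2)"
    using assms(3) by (intro sum.cong refl) (simp add: row_Sh)
  also have "\<dots> = real N * (\<Sum>i\<in>D. (T i)\<^sup>2)" by (simp add: sum_distrib_left)
  finally show ?thesis .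
qed


theorem proposition3:
  fixes N K S :: nat and E :: "nat \<Rightarrow> nat set" and Mf :: "(nat \<Rightarrow> nat set) set"
  assumes "0 < N" and "0 < K" and "0 < S"
    and E_sub: "\<forall>k<K. E k \<subseteq> {..<N}"
    and E_card: "\<forall>k<K. card (E k) = S"
    and Mf_fin: "finite Mf"
    and Mf_sub: "\<forall>Sp\<in>Mf. \<forall>k<K. Sp k \<subseteq> {..<S}"
    and entries01: "\<forall>Sp\<in>Mf. \<forall>Sp'\<in>Mf. \<forall>a<N. \<forall>b<N.
        network N K E (\<lambda>k. indic_vec (Sp k \<union> Sp' k)) a b \<in> {0, 1}"
  shows "(\<forall>Sp\<in>Mf. \<forall>Sp'\<in>Mf.
            kerS N K S E (supp_union Sp Sp') = orth_compl K S (Tsupp K S (supp_union Sp Sp')))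
       \<and> deep_NSP N K S E Mf 1 PInfty
       \<and> deep_lower_RIP N K S E Mf (sqrt (real N))
       \<and> (\<forall>Sp\<in>Mf. \<forall>Sp'\<in>Mf. \<forall>T\<in>tspace K S.
            (\<forall>U\<in>kerS N K S E (supp_union Sp Sp'). tinner K S T U = 0) \<longrightarrow>
            frob N (liftS N K S E (supp_union Sp Sp') T)
              = sqrt (real N) * tnorm K S (projS K S (supp_union Sp Sp') T))"
proof -
  note N0 = \<open>0 < N\<close>
  have fin: "finite (tidx K S)" using Lset_finite Lset_tidx by metis
  have spos_lt: "spos N K E i < N" for i using N0 by (simp add: spos_def)
  have inj: "inj_on (spos N K E) {i\<in>tidx K S. in_supp K (supp_union Sp Sp') i}"
    if "Sp \<in> Mf" "Sp' \<in> Mf" for Sp Sp'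
  proof (rule inj_onI, rule ccontr)
    fix i1 i2 assume i1: "i1 \<in> {i\<in>tidx K S. in_supp K (supp_union Sp Sp') i}"
      and i2: "i2 \<in> {i\<in>tidx K S. in_supp K (supp_union Sp Sp') i}"
      and eq: "spos N K E i1 = spos N K E i2" and ne: "i1 \<noteq> i2"
    let ?m = "spos N K E i1"
    let ?g = "\<lambda>i. (if in_supp K (supp_union Sp Sp') i then 1 else 0) * Sh N (spos N K E i) ?m 0"
    have sh1: "Sh N ?m ?m 0 = 1" using spos_lt[of i1] N0 by (simp add: Sh_def)
    have netv: "network N K E (\<lambda>k. indic_vec (Sp k \<union> Sp' k)) ?m 0 = (\<Sum>i\<in>tidx K S. ?g i)"
      using network_indic[OF E_sub E_card N0, of "supp_union Sp Sp'" ?m 0]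
      by (simp add: supp_union_def)
    have "(\<Sum>i\<in>{i1, i2}. ?g i) \<le> (\<Sum>i\<in>tidx K S. ?g i)"
      using fin i1 i2 by (intro sum_mono2) (auto simp: Sh_def)
    moreover have "(\<Sum>i\<in>{i1, i2}. ?g i) = 2" using ne i1 i2 sh1 eq by simp
    moreover have "network N K E (\<lambda>k. indic_vec (Sp k \<union> Sp' k)) ?m 0 \<in> {0, 1}"
      using entries01 that spos_lt[of i1] N0 by blast
    ultimately show False using netv by auto
  qed
  have tn: "tnorm K S (projS K S Us T) = sqrt (\<Sum>i\<in>{i\<in>tidx K S. in_supp K Us i}. (T i)\<^sup>2)" for Us T
  proof -
    have "(\<Sum>i\<in>tidx K S. (projS K S Us T i)\<^sup>2) = (\<Sum>i\<in>tidx K S. if in_supp K Us i then (T i)\<^sup>2 else 0)"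
      by (intro sum.cong refl) (auto simp: projS_def)
    then show ?thesis using fin by (simp add: tnorm_def sum.inter_filter)
  qed
  have key: "frob N (liftS N K S E (supp_union Sp Sp') T) = sqrt (real N) * tnorm K S (projS K S (supp_union Sp Sp') T)"
    if "Sp \<in> Mf" "Sp' \<in> Mf" for Sp Sp' T
  proof -
    let ?D = "{i\<in>tidx K S. in_supp K (supp_union Sp Sp') i}"
    have "frob N (liftS N K S E (supp_union Sp Sp') T) =
        sqrt (\<Sum>a<N. \<Sum>b<N. (\<Sum>i\<in>?D. T i * Sh N (spos N K E i) a b)\<^sup>2)"
      unfolding frob_def liftS_formula[OF E_sub E_card N0] ..
    also have "\<dots> = sqrt (real N * (\<Sum>i\<in>?D. (T i)\<^sup>2))"
      using sumsq_Sh[of ?D "spos N K E" N T] fin inj[OF that] spos_lt by simp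
    also have "\<dots> = sqrt (real N) * tnorm K S (projS K S (supp_union Sp Sp') T)"
      by (simp add: tn real_sqrt_mult)
    finally show ?thesis .
  qed
  have kerchar: "T \<in> kerS N K S E (supp_union Sp Sp') \<longleftrightarrow>
      T \<in> tspace K S \<and> (\<forall>i\<in>tidx K S. in_supp K (supp_union Sp Sp') i \<longrightarrow> T i = 0)"
    if "Sp \<in> Mf" "Sp' \<in> Mf" for Sp Sp' T
  proof
    assume h: "T \<in> kerS N K S E (supp_union Sp Sp')"
    let ?D = "{i\<in>tidx K S. in_supp K (supp_union Sp Sp') i}"
    have "frob N (liftS N K S E (supp_union Sp Sp') T) = 0"
      using h by (simp add: kerS_def frob_def)
    then have "tnorm K S (projS K S (supp_union Sp Sp') T) = 0"
      using key[OF that] N0 by simp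
    then have "(\<Sum>i\<in>?D. (T i)\<^sup>2) = 0" by (simp add: tn)
    then have "\<forall>i\<in>?D. (T i)\<^sup>2 = 0" using fin by (subst (asm) sum_nonneg_eq_0_iff) auto
    then show "T \<in> tspace K S \<and> (\<forall>i\<in>tidx K S. in_supp K (supp_union Sp Sp') i \<longrightarrow> T i = 0)"
      using h by (auto simp: kerS_def)
  next
    assume h: "T \<in> tspace K S \<and> (\<forall>i\<in>tidx K S. in_supp K (supp_union Sp Sp') i \<longrightarrow> T i = 0)"
    then show "T \<in> kerS N K S E (supp_union Sp Sp')"
      by (auto simp: kerS_def liftS_formula[OF E_sub E_card N0])
  qed
  have proj0: "projS K S (supp_union Sp Sp') T' = (\<lambda>i. 0)"
    if "Sp \<in> Mf" "Sp' \<in> Mf" "T' \<in> kerS N K S E (supp_union Sp Sp')" for Sp Sp' T'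
    using kerchar[OF that(1,2), of T'] that(3) by (auto simp: projS_def)
  have C1: "kerS N K S E (supp_union Sp Sp') = orth_compl K S (Tsupp K S (supp_union Sp Sp'))"
    if "Sp \<in> Mf" "Sp' \<in> Mf" for Sp Sp'
  proof
    show "kerS N K S E (supp_union Sp Sp') \<subseteq> orth_compl K S (Tsupp K S (supp_union Sp Sp'))"
    proof
      fix T assume "T \<in> kerS N K S E (supp_union Sp Sp')"
      then have h: "T \<in> tspace K S \<and> (\<forall>i\<in>tidx K S. in_supp K (supp_union Sp Sp') i \<longrightarrow> T i = 0)"
        using kerchar[OF that] by blast
      show "T \<in> orth_compl K S (Tsupp K S (supp_union Sp Sp'))"
        unfolding orth_compl_def tinner_def Tsupp_def
        using h by (auto intro!: sum.neutral)
    qed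
  next
    show "orth_compl K S (Tsupp K S (supp_union Sp Sp')) \<subseteq> kerS N K S E (supp_union Sp Sp')"
    proof
      fix T assume h: "T \<in> orth_compl K S (Tsupp K S (supp_union Sp Sp'))"
      let ?D = "{i\<in>tidx K S. in_supp K (supp_union Sp Sp') i}"
      have inT: "projS K S (supp_union Sp Sp') T \<in> Tsupp K S (supp_union Sp Sp')"
        by (auto simp: Tsupp_def tspace_def projS_def)
      have "tinner K S T (projS K S (supp_union Sp Sp') T) = 0" using h inT by (auto simp: orth_compl_def)
      moreover have "tinner K S T (projS K S (supp_union Sp Sp') T) = (\<Sum>i\<in>?D. (T i)\<^sup>2)"
      proof -
        have "tinner K S T (projS K S (supp_union Sp Sp') T) = (\<Sum>i\<in>tidx K S. if in_supp K (supp_union Sp Sp') i then (T i)\<^sup>2 else 0)"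
          unfolding tinner_def by (intro sum.cong refl) (auto simp: projS_def power2_eq_square)
        then show ?thesis using fin by (simp add: sum.inter_filter)
      qed
      ultimately have "(\<Sum>i\<in>?D. (T i)\<^sup>2) = 0" by simp
      then have "\<forall>i\<in>?D. (T i)\<^sup>2 = 0" using fin by (subst (asm) sum_nonneg_eq_0_iff) auto
      then show "T \<in> kerS N K S E (supp_union Sp Sp')"
        using kerchar[OF that] h by (auto simp: orth_compl_def)
    qed
  qed
  have C2: "deep_NSP N K S E Mf 1 PInfty"
    unfolding deep_NSP_def
  proof (intro ballI allI impI)
    fix Sp Sp' T T' assume "Sp \<in> Mf" "Sp' \<in> Mf" "T' \<in> kerS N K S E (supp_union Sp Sp')"
    then show "tnorm K S T \<le> 1 * tnorm K S (\<lambda>i. T i - projS K S (supp_union Sp Sp') T' i)"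
      using proj0 by simp
  qed
  have C3: "deep_lower_RIP N K S E Mf (sqrt (real N))"
    unfolding deep_lower_RIP_def using N0 key by simp
  show ?thesis using C1 C2 C3 key by blast
qed

end
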